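(* Let $\{a_n\}_{n=1}^\infty$ be a sequence of real numbers with $\limsup_{n\to\infty} a_n = \infty$. Then for infinitely many $k \in \mathbb{N}$, $$a_{k+1} > \left(1 + \frac{1}{k^2}\right)\max_{1 \le n \le k} a_n.$$ *)

theory Defs
  imports "HOL-Analysis.Analysis"
begin

end

theory Submission
  imports Defs
begin

theorem lemma2p7:
  fixes a :: "nat \<Rightarrow> real"
  assumes "limsup (\<lambda>n. ereal (a n)) = \<infinity>"
  shows "infinite {k::nat. k \<ge> 1 \<and> a (k + 1) > (1 + 1 / (real k)^2) * Max (a ` {1..k})}"
proof
  define M where "M k = Max (a ` {1..k})" for k
  define S where "S = {k::nat. k \<ge> 1 \<and> a (k + 1) > (1 + 1 / (real k)^2) * Max (a ` {1..k})}"
  assume "finite S"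
  then obtain N where N0: "\<forall>n\<in>S. n < N"
    unfolding finite_nat_set_iff_bounded by blast
  have N: "\<And>n. n \<in> S \<Longrightarrow> n < N" using N0 by blast
  define K where "K = max N 2"
  have K2: "K \<ge> 2" unfolding K_def by simp
  have notS: "k \<ge> K \<Longrightarrow> a (k+1) \<le> (1 + 1 / (real k)^2) * M k" for k
  proof -
    assume kK: "k \<ge> K"
    have "k \<ge> N" using kK unfolding K_def by simp
    then have "k \<notin> S" using N[of k] by (meson not_less)
    moreover have "k \<ge> 1" using kK K2 by simp
    ultimately have "\<not> (a (k + 1) > (1 + 1 / (real k)^2) * Max (a ` {1..k}))"
      unfolding S_def by blast
    then show ?thesis unfolding M_def by (simp only: not_less)
  qed
  have Msuc: "k \<ge> 1 \<Longrightarrow> M (Suc k) = max (a (Suc k)) (M k)" for k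
  proof -
    assume "k \<ge> 1"
    have i: "{1..Suc k} = insert (Suc k) {1..k}" by auto
    have ne: "a ` {1..k} \<noteq> {}" using \<open>k \<ge> 1\<close> by simp
    have "M (Suc k) = Max (insert (a (Suc k)) (a ` {1..k}))" unfolding M_def i by (simp only: image_insert)
    also have "\<dots> = max (a (Suc k)) (Max (a ` {1..k}))"
      by (rule Max_insert[OF finite_imageI[OF finite_atLeastAtMost] ne])
    finally show ?thesis unfolding M_def .
  qed
  have amem: "1 \<le> n \<Longrightarrow> n \<le> k \<Longrightarrow> a n \<le> M k" for n k
    unfolding M_def by (rule Max_ge) auto
  have stepM: "max (M (Suc k)) 0 \<le> (1 + 1 / (real k)^2) * max (M k) 0" if "k \<ge> K" for k
  proof -
    define c where "c = 1 + 1 / (real k)^2"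
    have k1: "k \<ge> 1" using that K2 by simp
    have c: "c \<ge> 1" unfolding c_def by simp
    have ak: "a (Suc k) \<le> c * M k" using notS[OF that] unfolding c_def by simp
    have ms: "M (Suc k) = max (a (Suc k)) (M k)" by (rule Msuc[OF k1])
    have "max (M (Suc k)) 0 \<le> c * max (M k) 0"
    proof (cases "M k \<ge> 0")
      case True
      have "1 * M k \<le> c * M k" using mult_right_mono[OF c True] .
      then have "M (Suc k) \<le> c * M k" using ms ak by linarith
      moreover have "0 \<le> c * M k" using c True by simp
      ultimately show ?thesis using True by (simp add: max_def)
    next
      case False
      have "c * M k \<le> 1 * M k" using mult_right_mono_neg[OF c, of "M k"] False by linarith
      then have "M (Suc k) \<le> M k" using ms ak by linarith
      then show ?thesis using False c by (simp add: max_def)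
    qed
    then show ?thesis unfolding c_def .
  qed
  have expb: "(1 + 1 / (real k)^2) * exp (1 / real k) \<le> exp (1 / (real k - 1))" if "k \<ge> 2" for k
  proof -
    have kk: "real k \<ge> 2" using that by simp
    have e: "1 / (real k - 1) - 1 / real k = 1 / (real k * (real k - 1))"
      using kk by (simp add: field_simps)
    have "1 / (real k)^2 \<le> 1 / (real k * (real k - 1))"
      using kk by (intro divide_left_mono) (auto simp: power2_eq_square intro!: mult_pos_pos)
    also have "\<dots> \<le> exp (1 / (real k - 1) - 1 / real k) - 1"
      unfolding e using exp_ge_add_one_self[of "1 / (real k * (real k - 1))"] by linarith
    finally have "1 + 1 / (real k)^2 \<le> exp (1 / (real k - 1) - 1 / real k)" by simp
    then have "(1 + 1 / (real k)^2) * exp (1 / real k) \<le> exp (1 / (real k - 1) - 1 / real k) * exp (1 / real k)"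
      by (simp add: mult_right_mono)
    also have "\<dots> = exp (1 / (real k - 1))" by (simp add: exp_add[symmetric])
    finally show ?thesis .
  qed
  define C where "C = max (M K) 0 * exp (1 / (real K - 1))"
  have ind: "max (M k) 0 * exp (1 / (real k - 1)) \<le> C" if "k \<ge> K" for k
    using that
  proof (induction k rule: dec_induct)
    case base then show ?case by (simp add: C_def)
  next
    case (step k)
    have k2: "k \<ge> 2" using step.hyps K2 by simp
    have "max (M (Suc k)) 0 * exp (1 / (real (Suc k) - 1))
          = max (M (Suc k)) 0 * exp (1 / real k)" by simp
    also have "\<dots> \<le> (1 + 1 / (real k)^2) * max (M k) 0 * exp (1 / real k)"
      using \<open>K \<le> k\<close> by (intro mult_right_mono) (use stepM[of k] in auto)
    also have "\<dots> = max (M k) 0 * ((1 + 1 / (real k)^2) * exp (1 / real k))" by simp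
    also have "\<dots> \<le> max (M k) 0 * exp (1 / (real k - 1))"
      by (intro mult_left_mono expb k2) simp
    also have "\<dots> \<le> C" by (rule step.IH)
    finally show ?case .
  qed
  have bndM: "max (M k) 0 \<le> C" if "k \<ge> K" for k
  proof -
    have "max (M k) 0 * 1 \<le> max (M k) 0 * exp (1 / (real k - 1))"
      using that K2 by (intro mult_left_mono) auto
    then show ?thesis using ind[OF that] by simp
  qed
  have bnd: "a n \<le> max C (a 0)" for n
  proof (cases "n = 0")
    case True then show ?thesis by simp
  next
    case False
    then have "a n \<le> M (max n K)" by (intro amem) auto
    also have "\<dots> \<le> C" using bndM[of "max n K"] by simp
    finally show ?thesis by simp
  qed
  have "limsup (\<lambda>n. ereal (a n)) \<le> ereal (max C (a 0))"
  proof (intro Limsup_bounded always_eventually allI)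
    fix n show "ereal (a n) \<le> ereal (max C (a 0))" using bnd[of n] by (simp only: ereal_less_eq)
  qed
  then show False using assms by (metis PInfty_neq_ereal(1) ereal_infty_less_eq(1))
qed

end
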